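(* (1) The associative algebra $(\mathcal{H}_{\mathbb{T}},.)$ is freely generated by the set of indecomposable topologies. (2) The associative algebra $(\mathcal{H}_{\mathbb{T}},\downarrow)$ is freely generated by the set of $\downarrow$-indecomposable topologies. (3) The 2-associative algebra $(\mathcal{H}_{\mathbb{T}},.,\downarrow)$ is freely generated by the set of bi-indecomposable topologies, i.e. for every 2-associative algebra $(A,.,\downarrow)$ and every choice of elements $a_{\mathcal{T}}\in A$ indexed by the bi-indecomposable topologies $\mathcal{T}$, there is a unique linear map $\phi:\mathcal{H}_{\mathbb{T}}\to A$ sending $1$ to the unit of $A$, compatible with both products, and with $\phi(\mathcal{T})=a_{\mathcal{T}}$ for every bi-indecomposable $\mathcal{T}$.
   Context: Let $K$ be a field. For $n\geq0$, $[n]=\{1,\ldots,n\}$, $\mathbb{T}_n$ is the set of topologies on $[n]$, and $\mathcal{H}_{\mathbb{T}}$ is the $K$-vector space with basis $\bigsqcup_{n\ge0}\mathbb{T}_n$; the empty topology on $[0]$ is denoted $1$. For $O\subseteq\mathbb{N}$, $O(+n)=\{k+n\mid k\in O\}$. For $\mathcal{T}\in\mathbb{T}_n$, $\mathcal{T}'\in\mathbb{T}_{n'}$: $\mathcal{T}.\mathcal{T}'$ is the topology on $[n+n']$ with open sets $O\sqcup O'(+n)$ ($O\in\mathcal{T}$, $O'\in\mathcal{T}'$); $\mathcal{T}\downarrow\mathcal{T}'$ is the topology on $[n+n']$ with open sets $O\sqcup[n'](+n)$ ($O\in\mathcal{T}$) and $O'(+n)$ ($O'\in\mathcal{T}'$).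 Both products are extended bilinearly to $\mathcal{H}_{\mathbb{T}}$; they are associative with common unit $1$. A topology $\mathcal{T}\neq 1$ is indecomposable if it cannot be written $\mathcal{T}'.\mathcal{T}''$ with $\mathcal{T}',\mathcal{T}''\neq1$; $\downarrow$-indecomposable if it cannot be written $\mathcal{T}'\downarrow\mathcal{T}''$ with $\mathcal{T}',\mathcal{T}''\neq 1$; bi-indecomposable if it is both. A 2-associative algebra is a vector space with two associative products sharing the same unit; morphisms preserve both products and the unit. *)

theory Defs
  imports Main "HOL-Library.Poly_Mapping"
begin

text \<open>A topology on [n] is encoded as the pair (n, T) with T the set of open sets.\<close>
type_synonym top = "nat \<times> nat set set"

definition is_topology :: "nat \<Rightarrow> nat set set \<Rightarrow> bool" where
  "is_topology n T \<longleftrightarrow> T \<subseteq> Pow {1..n} \<and> {1..n} \<in> T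
     \<and> (\<forall>S. S \<subseteq> T \<longrightarrow> \<Union>S \<in> T)
     \<and> (\<forall>U\<in>T. \<forall>V\<in>T. U \<inter> V \<in> T)"

definition Tops :: "top set" where
  "Tops = {(n, T). is_topology n T}"

definition shift :: "nat \<Rightarrow> nat set \<Rightarrow> nat set" where
  "shift n O' = (\<lambda>k. k + n) ` O'"

definition unit_top :: top where
  "unit_top = (0, {{}})"

definition dot_top :: "top \<Rightarrow> top \<Rightarrow> top" where
  "dot_top t t' = (case t of (n, T) \<Rightarrow> case t' of (n', T') \<Rightarrow>
     (n + n', {O1 \<union> shift n O2 | O1 O2. O1 \<in> T \<and> O2 \<in> T'}))"

definition down_top :: "top \<Rightarrow> top \<Rightarrow> top" where
  "down_top t t' = (case t of (n, T) \<Rightarrow> case t' of (n', T') \<Rightarrow>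
     (n + n', {O1 \<union> shift n {1..n'} | O1. O1 \<in> T} \<union> {shift n O2 | O2. O2 \<in> T'}))"

definition indecomposable :: "top \<Rightarrow> bool" where
  "indecomposable t \<longleftrightarrow> t \<in> Tops \<and> t \<noteq> unit_top \<and>
     \<not> (\<exists>t1\<in>Tops. \<exists>t2\<in>Tops. t1 \<noteq> unit_top \<and> t2 \<noteq> unit_top \<and> t = dot_top t1 t2)"

definition down_indecomposable :: "top \<Rightarrow> bool" where
  "down_indecomposable t \<longleftrightarrow> t \<in> Tops \<and> t \<noteq> unit_top \<and>
     \<not> (\<exists>t1\<in>Tops. \<exists>t2\<in>Tops. t1 \<noteq> unit_top \<and> t2 \<noteq> unit_top \<and> t = down_top t1 t2)"

definition bi_indecomposable :: "top \<Rightarrow> bool" where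
  "bi_indecomposable t \<longleftrightarrow> indecomposable t \<and> down_indecomposable t"

type_synonym 'k hvec = "top \<Rightarrow>\<^sub>0 'k"

definition HT :: "'k::field hvec set" where
  "HT = {f. Poly_Mapping.keys f \<subseteq> Tops}"

definition basis :: "top \<Rightarrow> 'k::field hvec" where
  "basis t = Poly_Mapping.single t 1"

definition hscale :: "'k::field \<Rightarrow> 'k hvec \<Rightarrow> 'k hvec" where
  "hscale c f = Poly_Mapping.map (\<lambda>x. c * x) f"

definition lin_prod :: "(top \<Rightarrow> top \<Rightarrow> top) \<Rightarrow> 'k::field hvec \<Rightarrow> 'k hvec \<Rightarrow> 'k hvec" where
  "lin_prod P f g = (\<Sum>x\<in>Poly_Mapping.keys f. \<Sum>y\<in>Poly_Mapping.keys g.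
      Poly_Mapping.single (P x y) (Poly_Mapping.lookup f x * Poly_Mapping.lookup g y))"

definition k_algebra :: "('k::field \<Rightarrow> 'a::ab_group_add \<Rightarrow> 'a) \<Rightarrow> ('a \<Rightarrow> 'a \<Rightarrow> 'a) \<Rightarrow> 'a \<Rightarrow> bool" where
  "k_algebra sc m u \<longleftrightarrow>
     (\<forall>c x y. sc c (x + y) = sc c x + sc c y) \<and>
     (\<forall>c d x. sc (c + d) x = sc c x + sc d x) \<and>
     (\<forall>c d x. sc (c * d) x = sc c (sc d x)) \<and>
     (\<forall>x. sc 1 x = x) \<and>
     (\<forall>x y z. m (m x y) z = m x (m y z)) \<and>
     (\<forall>x y z. m (x + y) z = m x z + m y z) \<and>
     (\<forall>x y z. m x (y + z) = m x y + m x z) \<and>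
     (\<forall>c x y. m (sc c x) y = sc c (m x y)) \<and>
     (\<forall>c x y. m x (sc c y) = sc c (m x y)) \<and>
     (\<forall>x. m u x = x) \<and> (\<forall>x. m x u = x)"

definition two_assoc_algebra :: "('k::field \<Rightarrow> 'a::ab_group_add \<Rightarrow> 'a) \<Rightarrow> ('a \<Rightarrow> 'a \<Rightarrow> 'a) \<Rightarrow> ('a \<Rightarrow> 'a \<Rightarrow> 'a) \<Rightarrow> 'a \<Rightarrow> bool" where
  "two_assoc_algebra sc m1 m2 u \<longleftrightarrow> k_algebra sc m1 u \<and> k_algebra sc m2 u"

text \<open>K-linear maps on H_T (only values on H_T matter).\<close>
definition lin_on_HT :: "('k::field \<Rightarrow> 'a::ab_group_add \<Rightarrow> 'a) \<Rightarrow> ('k hvec \<Rightarrow> 'a) \<Rightarrow> bool" where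
  "lin_on_HT sc \<phi> \<longleftrightarrow> (\<forall>f\<in>HT. \<forall>g\<in>HT. \<phi> (f + g) = \<phi> f + \<phi> g) \<and>
                      (\<forall>c. \<forall>f\<in>HT. \<phi> (hscale c f) = sc c (\<phi> f))"

definition alg_hom_HT :: "(top \<Rightarrow> top \<Rightarrow> top) \<Rightarrow> ('k::field \<Rightarrow> 'a::ab_group_add \<Rightarrow> 'a) \<Rightarrow> ('a \<Rightarrow> 'a \<Rightarrow> 'a) \<Rightarrow> 'a \<Rightarrow> ('k hvec \<Rightarrow> 'a) \<Rightarrow> bool" where
  "alg_hom_HT P sc m u \<phi> \<longleftrightarrow> lin_on_HT sc \<phi> \<and> \<phi> (basis unit_top) = u \<and>
     (\<forall>f\<in>HT. \<forall>g\<in>HT. \<phi> (lin_prod P f g) = m (\<phi> f) (\<phi> g))"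

text \<open>(H_T, P) is freely generated (as unital associative K-algebra) by the set of
  topologies satisfying G, tested against algebras on the type 'a.\<close>
definition freely_generated :: "'k::field itself \<Rightarrow> 'a::ab_group_add itself \<Rightarrow> (top \<Rightarrow> top \<Rightarrow> top) \<Rightarrow> (top \<Rightarrow> bool) \<Rightarrow> bool" where
  "freely_generated _ _ P G \<longleftrightarrow>
    (\<forall>(sc :: 'k \<Rightarrow> 'a \<Rightarrow> 'a) m u (a :: top \<Rightarrow> 'a). k_algebra sc m u \<longrightarrow>
      (\<exists>\<phi>. alg_hom_HT P sc m u \<phi> \<and> (\<forall>t. G t \<longrightarrow> \<phi> (basis t) = a t) \<and>
        (\<forall>\<psi>. alg_hom_HT P sc m u \<psi> \<and> (\<forall>t. G t \<longrightarrow> \<psi> (basis t) = a t)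
              \<longrightarrow> (\<forall>f\<in>HT. \<psi> f = \<phi> f))))"

definition freely_generated2 :: "'k::field itself \<Rightarrow> 'a::ab_group_add itself \<Rightarrow> (top \<Rightarrow> bool) \<Rightarrow> bool" where
  "freely_generated2 _ _ G \<longleftrightarrow>
    (\<forall>(sc :: 'k \<Rightarrow> 'a \<Rightarrow> 'a) m1 m2 u (a :: top \<Rightarrow> 'a). two_assoc_algebra sc m1 m2 u \<longrightarrow>
      (\<exists>\<phi>. alg_hom_HT dot_top sc m1 u \<phi> \<and> alg_hom_HT down_top sc m2 u \<phi> \<and>
           (\<forall>t. G t \<longrightarrow> \<phi> (basis t) = a t) \<and>
        (\<forall>\<psi>. alg_hom_HT dot_top sc m1 u \<psi> \<and> alg_hom_HT down_top sc m2 u \<psi> \<and>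
              (\<forall>t. G t \<longrightarrow> \<psi> (basis t) = a t)
              \<longrightarrow> (\<forall>f\<in>HT. \<psi> f = \<phi> f))))"

end

theory Submission
  imports Defs
begin

definition ush :: "nat \<Rightarrow> nat set \<Rightarrow> nat set" where
  "ush n X = {x. 0 < x \<and> x + n \<in> X}"

lemma top_sub: "is_topology n T \<Longrightarrow> O' \<in> T \<Longrightarrow> O' \<subseteq> {1..n}"
  unfolding is_topology_def by auto
lemma top_full: "is_topology n T \<Longrightarrow> {1..n} \<in> T"
  unfolding is_topology_def by auto
lemma top_empty: "is_topology n T \<Longrightarrow> {} \<in> T"
  unfolding is_topology_def by (metis Union_empty empty_subsetI)
lemma top_Union: "is_topology n T \<Longrightarrow> S \<subseteq> T \<Longrightarrow> \<Union>S \<in> T"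
  unfolding is_topology_def by auto
lemma top_Int: "is_topology n T \<Longrightarrow> U \<in> T \<Longrightarrow> V \<in> T \<Longrightarrow> U \<inter> V \<in> T"
  unfolding is_topology_def by auto

lemma shift_mem: "x \<in> shift n A \<longleftrightarrow> n \<le> x \<and> x - n \<in> A"
  unfolding shift_def by (auto intro: image_eqI[where x="x - n"])

lemma decomp: "X \<subseteq> {1..n+n'} \<Longrightarrow> X = (X \<inter> {1..n}) \<union> shift n (ush n X)"
  unfolding ush_def by (auto simp: shift_mem subset_iff)

lemma ush_sub: "X \<subseteq> {1..n+n'} \<Longrightarrow> ush n X \<subseteq> {1..n'}"
  unfolding ush_def by auto

lemma parts: "O1 \<subseteq> {1..n} \<Longrightarrow> O2 \<subseteq> {1..n'} \<Longrightarrow>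
   (O1 \<union> shift n O2) \<inter> {1..n} = O1 \<and> ush n (O1 \<union> shift n O2) = O2 \<and> O1 \<union> shift n O2 \<subseteq> {1..n+n'}"
  unfolding ush_def by (auto simp: shift_mem subset_iff)

lemma dot_char:
  assumes "is_topology n T" "is_topology n' T'"
  shows "X \<in> {O1 \<union> shift n O2 | O1 O2. O1 \<in> T \<and> O2 \<in> T'} \<longleftrightarrow>
     X \<subseteq> {1..n+n'} \<and> X \<inter> {1..n} \<in> T \<and> ush n X \<in> T'"
proof
  assume "X \<in> {O1 \<union> shift n O2 | O1 O2. O1 \<in> T \<and> O2 \<in> T'}"
  then obtain O1 O2 where "X = O1 \<union> shift n O2" "O1 \<in> T" "O2 \<in> T'" by blast
  moreover have "(O1 \<union> shift n O2) \<inter> {1..n} = O1 \<and> ush n (O1 \<union> shift n O2) = O2 \<and> O1 \<union> shift n O2 \<subseteq> {1..n+n'}"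
    by (rule parts[OF top_sub[OF assms(1)] top_sub[OF assms(2)]]) fact+
  ultimately show "X \<subseteq> {1..n+n'} \<and> X \<inter> {1..n} \<in> T \<and> ush n X \<in> T'"
    by simp
next
  assume "X \<subseteq> {1..n+n'} \<and> X \<inter> {1..n} \<in> T \<and> ush n X \<in> T'"
  then show "X \<in> {O1 \<union> shift n O2 | O1 O2. O1 \<in> T \<and> O2 \<in> T'}"
  proof -
    assume h: "X \<subseteq> {1..n+n'} \<and> X \<inter> {1..n} \<in> T \<and> ush n X \<in> T'"
    then have "X = (X \<inter> {1..n}) \<union> shift n (ush n X)" using decomp by blast
    with h show ?thesis by blast
  qed
qed

lemma Int_Union_distrib': "(\<Union>S) \<inter> A = \<Union>((\<lambda>X. X \<inter> A) ` S)" by auto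
lemma ush_Union: "ush n (\<Union>S) = \<Union>(ush n ` S)" unfolding ush_def by auto
lemma ush_full: "ush n {1..n+n'} = {1..n'}" unfolding ush_def by auto
lemma ush_Int: "ush n (X \<inter> Y) = ush n X \<inter> ush n Y" unfolding ush_def by auto

lemma dot_Tops:
  assumes "a \<in> Tops" "b \<in> Tops" shows "dot_top a b \<in> Tops"
proof -
  obtain n T n' T' where ab: "a = (n,T)" "b = (n',T')" by fastforce
  have t: "is_topology n T" "is_topology n' T'" using assms ab by (auto simp: Tops_def)
  let ?R = "{O1 \<union> shift n O2 | O1 O2. O1 \<in> T \<and> O2 \<in> T'}"
  note ch = dot_char[OF t]
  have "is_topology (n+n') ?R"
    unfolding is_topology_def
  proof (intro conjI allI impI ballI)
    show "?R \<subseteq> Pow {1..n + n'}"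
    proof
      fix X assume "X \<in> ?R"
      then have "X \<subseteq> {1..n+n'}" using ch[THEN iffD1] by blast
      then show "X \<in> Pow {1..n + n'}" by simp
    qed
    show "{1..n + n'} \<in> ?R" unfolding ch ush_full using top_full[OF t(1)] top_full[OF t(2)]
      by (simp add: Int_absorb2)
    fix S assume S: "S \<subseteq> ?R"
    have SR: "X \<subseteq> {1..n+n'} \<and> X \<inter> {1..n} \<in> T \<and> ush n X \<in> T'" if "X \<in> S" for X
      using ch[THEN iffD1, OF subsetD[OF S that]] .
    show "\<Union>S \<in> ?R" unfolding ch
    proof (intro conjI)
      show "\<Union>S \<subseteq> {1..n+n'}" using SR by blast
      show "\<Union>S \<inter> {1..n} \<in> T" unfolding Int_Union_distrib'
        by (rule top_Union[OF t(1)]) (use SR in blast)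
      show "ush n (\<Union>S) \<in> T'" unfolding ush_Union
        by (rule top_Union[OF t(2)]) (use SR in blast)
    qed
  next
    fix U V assume "U \<in> ?R" "V \<in> ?R"
    then have u: "U \<subseteq> {1..n+n'}" "U \<inter> {1..n} \<in> T" "ush n U \<in> T'"
      and v: "V \<subseteq> {1..n+n'}" "V \<inter> {1..n} \<in> T" "ush n V \<in> T'" unfolding ch by auto
    have "(U \<inter> V) \<inter> {1..n} = (U \<inter> {1..n}) \<inter> (V \<inter> {1..n})" by blast
    then show "U \<inter> V \<in> ?R" unfolding ch ush_Int
      using top_Int[OF t(1) u(2) v(2)] top_Int[OF t(2) u(3) v(3)] u(1) by auto
  qed
  then show ?thesis using ab by (simp add: dot_top_def Tops_def)
qed


lemma shift_empty[simp]: "shift n {} = {}" by (simp add: shift_def)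

lemma down_char:
  assumes "is_topology n T" "is_topology n' T'"
  shows "X \<in> {O1 \<union> shift n {1..n'} | O1. O1 \<in> T} \<union> {shift n O2 | O2. O2 \<in> T'} \<longleftrightarrow>
     X \<subseteq> {1..n+n'} \<and> X \<inter> {1..n} \<in> T \<and> ush n X \<in> T' \<and> (X \<inter> {1..n} = {} \<or> ush n X = {1..n'})"
proof
  assume "X \<in> {O1 \<union> shift n {1..n'} | O1. O1 \<in> T} \<union> {shift n O2 | O2. O2 \<in> T'}"
  then show "X \<subseteq> {1..n+n'} \<and> X \<inter> {1..n} \<in> T \<and> ush n X \<in> T' \<and> (X \<inter> {1..n} = {} \<or> ush n X = {1..n'})"
  proof
    assume "X \<in> {O1 \<union> shift n {1..n'} | O1. O1 \<in> T}"
    then obtain O1 where X: "X = O1 \<union> shift n {1..n'}" "O1 \<in> T" by blast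
    have "(O1 \<union> shift n {1..n'}) \<inter> {1..n} = O1 \<and> ush n (O1 \<union> shift n {1..n'}) = {1..n'} \<and> O1 \<union> shift n {1..n'} \<subseteq> {1..n+n'}"
      by (rule parts[OF top_sub[OF assms(1)]]) (use X in auto)
    then show ?thesis using X top_full[OF assms(2)] by simp
  next
    assume "X \<in> {shift n O2 | O2. O2 \<in> T'}"
    then obtain O2 where X: "X = {} \<union> shift n O2" "O2 \<in> T'" by blast
    have "({} \<union> shift n O2) \<inter> {1..n} = {} \<and> ush n ({} \<union> shift n O2) = O2 \<and> {} \<union> shift n O2 \<subseteq> {1..n+n'}"
      by (rule parts[OF _ top_sub[OF assms(2)]]) (use X in auto)
    then show ?thesis using X top_empty[OF assms(1)] by simp
  qed
next
  assume h: "X \<subseteq> {1..n+n'} \<and> X \<inter> {1..n} \<in> T \<and> ush n X \<in> T' \<and> (X \<inter> {1..n} = {} \<or> ush n X = {1..n'})"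
  then have X: "X = (X \<inter> {1..n}) \<union> shift n (ush n X)" using decomp by blast
  show "X \<in> {O1 \<union> shift n {1..n'} | O1. O1 \<in> T} \<union> {shift n O2 | O2. O2 \<in> T'}"
  proof (cases "X \<inter> {1..n} = {}")
    case True
    then have "X = shift n (ush n X)" using X by simp
    then show ?thesis using h by blast
  next
    case False
    then have "X = (X \<inter> {1..n}) \<union> shift n {1..n'}" using X h by simp
    then show ?thesis using h by blast
  qed
qed

lemma down_Tops:
  assumes "a \<in> Tops" "b \<in> Tops" shows "down_top a b \<in> Tops"
proof -
  obtain n T n' T' where ab: "a = (n,T)" "b = (n',T')" by fastforce
  have t: "is_topology n T" "is_topology n' T'" using assms ab by (auto simp: Tops_def)
  let ?R = "{O1 \<union> shift n {1..n'} | O1. O1 \<in> T} \<union> {shift n O2 | O2. O2 \<in> T'}"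
  note ch = down_char[OF t]
  have "is_topology (n+n') ?R"
    unfolding is_topology_def
  proof (intro conjI allI impI ballI)
    show "?R \<subseteq> Pow {1..n + n'}"
    proof
      fix X assume "X \<in> ?R"
      then have "X \<subseteq> {1..n+n'}" using ch[THEN iffD1] by blast
      then show "X \<in> Pow {1..n + n'}" by simp
    qed
    show "{1..n + n'} \<in> ?R" unfolding ch ush_full using top_full[OF t(1)] top_full[OF t(2)]
      by (simp add: Int_absorb2)
    fix S assume S: "S \<subseteq> ?R"
    have SR: "X \<subseteq> {1..n+n'} \<and> X \<inter> {1..n} \<in> T \<and> ush n X \<in> T' \<and> (X \<inter> {1..n} = {} \<or> ush n X = {1..n'})" if "X \<in> S" for X
      using ch[THEN iffD1, OF subsetD[OF S that]] .
    show "\<Union>S \<in> ?R" unfolding ch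
    proof (intro conjI)
      show "\<Union>S \<subseteq> {1..n+n'}" using SR by blast
      show "\<Union>S \<inter> {1..n} \<in> T" unfolding Int_Union_distrib'
        by (rule top_Union[OF t(1)]) (use SR in blast)
      show "ush n (\<Union>S) \<in> T'" unfolding ush_Union
        by (rule top_Union[OF t(2)]) (use SR in blast)
      show "\<Union>S \<inter> {1..n} = {} \<or> ush n (\<Union>S) = {1..n'}"
      proof (cases "\<Union>S \<inter> {1..n} = {}")
        case False
        then obtain X where X: "X \<in> S" "X \<inter> {1..n} \<noteq> {}" by blast
        then have "ush n X = {1..n'}" using SR by blast
        moreover have "ush n Y \<subseteq> {1..n'}" if "Y \<in> S" for Y using SR[OF that] ush_sub by blast
        ultimately have "ush n (\<Union>S) = {1..n'}" unfolding ush_Union using X(1) by blast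
        then show ?thesis by simp
      qed simp
    qed
  next
    fix U V assume "U \<in> ?R" "V \<in> ?R"
    then have u: "U \<subseteq> {1..n+n'}" "U \<inter> {1..n} \<in> T" "ush n U \<in> T'" "U \<inter> {1..n} = {} \<or> ush n U = {1..n'}"
      and v: "V \<subseteq> {1..n+n'}" "V \<inter> {1..n} \<in> T" "ush n V \<in> T'" "V \<inter> {1..n} = {} \<or> ush n V = {1..n'}"
      unfolding ch by auto
    have e: "(U \<inter> V) \<inter> {1..n} = (U \<inter> {1..n}) \<inter> (V \<inter> {1..n})" by blast
    have "(U \<inter> V) \<inter> {1..n} = {} \<or> ush n U \<inter> ush n V = {1..n'}"
      using u(4) v(4) e by auto
    then show "U \<inter> V \<in> ?R" unfolding ch ush_Int e
      using top_Int[OF t(1) u(2) v(2)] top_Int[OF t(2) u(3) v(3)] u(1) by auto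
  qed
  then show ?thesis using ab by (simp add: down_top_def Tops_def)
qed


definition restr :: "top \<Rightarrow> nat \<Rightarrow> top" where
  "restr t j = (j, (\<lambda>O'. O' \<inter> {1..j}) ` snd t)"
definition rrest :: "top \<Rightarrow> nat \<Rightarrow> top" where
  "rrest t k = (fst t - k, ush k ` snd t)"

lemma restr_Tops:
  assumes "b \<in> Tops" "j \<le> fst b" shows "restr b j \<in> Tops"
proof -
  obtain n T where b: "b = (n,T)" by fastforce
  have t: "is_topology n T" using assms b by (auto simp: Tops_def)
  have "is_topology j ((\<lambda>O'. O' \<inter> {1..j}) ` T)"
    unfolding is_topology_def
  proof (intro conjI allI impI ballI)
    show "(\<lambda>O'. O' \<inter> {1..j}) ` T \<subseteq> Pow {1..j}" by auto
    have "{1..j} = {1..n} \<inter> {1..j}" using assms b by auto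
    then show "{1..j} \<in> (\<lambda>O'. O' \<inter> {1..j}) ` T" using top_full[OF t] by blast
    fix S assume "S \<subseteq> (\<lambda>O'. O' \<inter> {1..j}) ` T"
    then obtain S' where S': "S' \<subseteq> T" "S = (\<lambda>O'. O' \<inter> {1..j}) ` S'" by (auto simp: subset_image_iff)
    then have "\<Union>S = (\<Union>S') \<inter> {1..j}" by auto
    then show "\<Union>S \<in> (\<lambda>O'. O' \<inter> {1..j}) ` T" using top_Union[OF t S'(1)] by blast
  next
    fix U V assume "U \<in> (\<lambda>O'. O' \<inter> {1..j}) ` T" "V \<in> (\<lambda>O'. O' \<inter> {1..j}) ` T"
    then obtain U' V' where "U' \<in> T" "V' \<in> T" "U = U' \<inter> {1..j}" "V = V' \<inter> {1..j}" by blast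
    then have "U \<inter> V = (U' \<inter> V') \<inter> {1..j}" "U' \<inter> V' \<in> T" using top_Int[OF t] by auto
    then show "U \<inter> V \<in> (\<lambda>O'. O' \<inter> {1..j}) ` T" by blast
  qed
  then show ?thesis by (simp add: restr_def Tops_def b)
qed

lemma fst_restr[simp]: "fst (restr b j) = j" by (simp add: restr_def)

lemma fst_dot[simp]: "fst (dot_top a b) = fst a + fst b"
  by (cases a; cases b) (simp add: dot_top_def)
lemma fst_down[simp]: "fst (down_top a b) = fst a + fst b"
  by (cases a; cases b) (simp add: down_top_def)

lemma Tops_fst0: "t \<in> Tops \<Longrightarrow> fst t = 0 \<Longrightarrow> t = unit_top"
proof -
  assume "t \<in> Tops" "fst t = 0"
  then obtain T where t: "t = (0,T)" "is_topology 0 T" by (cases t) (auto simp: Tops_def)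
  then have "T \<subseteq> {{}}" "{} \<in> T" using top_empty unfolding is_topology_def by auto
  then have "T = {{}}" by blast
  then show ?thesis using t by (simp add: unit_top_def)
qed

lemma unit_Tops: "unit_top \<in> Tops"
  by (auto simp: unit_top_def Tops_def is_topology_def)

lemma fst_unit[simp]: "fst unit_top = 0" by (simp add: unit_top_def)

lemma dot_restr_left:
  assumes "a \<in> Tops" "b \<in> Tops" shows "restr (dot_top a b) (fst a) = a"
proof -
  obtain n T n' T' where ab: "a = (n,T)" "b = (n',T')" by fastforce
  have t: "is_topology n T" "is_topology n' T'" using assms ab by (auto simp: Tops_def)
  note ch = dot_char[OF t]
  let ?R = "{O1 \<union> shift n O2 | O1 O2. O1 \<in> T \<and> O2 \<in> T'}"
  have "(\<lambda>O'. O' \<inter> {1..n}) ` ?R = T"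
  proof
    show "(\<lambda>O'. O' \<inter> {1..n}) ` ?R \<subseteq> T"
    proof (rule image_subsetI)
      fix X assume "X \<in> ?R" from ch[THEN iffD1, OF this] show "X \<inter> {1..n} \<in> T" by simp
    qed
    show "T \<subseteq> (\<lambda>O'. O' \<inter> {1..n}) ` ?R"
    proof
      fix O1 assume "O1 \<in> T"
      then have h1: "O1 \<union> shift n {} \<in> ?R" using top_empty[OF t(2)] by blast
      have h2: "(O1 \<union> shift n {}) \<inter> {1..n} = O1" using top_sub[OF t(1) \<open>O1 \<in> T\<close>] by auto
      show "O1 \<in> (\<lambda>O'. O' \<inter> {1..n}) ` ?R" by (rule image_eqI[where f="\<lambda>O'. O' \<inter> {1..n}", OF h2[symmetric] h1])
    qed
  qed
  moreover have "dot_top a b = (n+n', ?R)" by (simp add: ab dot_top_def)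
  ultimately show ?thesis unfolding restr_def by (simp only: ab fst_conv snd_conv)
qed

lemma dot_rrest:
  assumes "a \<in> Tops" "b \<in> Tops" shows "rrest (dot_top a b) (fst a) = b"
proof -
  obtain n T n' T' where ab: "a = (n,T)" "b = (n',T')" by fastforce
  have t: "is_topology n T" "is_topology n' T'" using assms ab by (auto simp: Tops_def)
  note ch = dot_char[OF t]
  let ?R = "{O1 \<union> shift n O2 | O1 O2. O1 \<in> T \<and> O2 \<in> T'}"
  have "ush n ` ?R = T'"
  proof
    show "ush n ` ?R \<subseteq> T'"
    proof (rule image_subsetI)
      fix X assume "X \<in> ?R" from ch[THEN iffD1, OF this] show "ush n X \<in> T'" by simp
    qed
    show "T' \<subseteq> ush n ` ?R"
    proof
      fix O2 assume o: "O2 \<in> T'"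
      then have h1: "{} \<union> shift n O2 \<in> ?R" using top_empty[OF t(1)] by blast
      have h2: "ush n ({} \<union> shift n O2) = O2"
        using parts[of "{}" n O2 n'] top_sub[OF t(2) o] by simp
      show "O2 \<in> ush n ` ?R" by (rule image_eqI[where f="ush n", OF h2[symmetric] h1])
    qed
  qed
  moreover have "dot_top a b = (n+n', ?R)" by (simp add: ab dot_top_def)
  ultimately show ?thesis unfolding rrest_def by (simp only: ab fst_conv snd_conv add_diff_cancel_left')
qed

lemma cut_lem: assumes "O1 \<subseteq> {1..n}" "O2 \<subseteq> {1..m}"
  shows "(O1 \<union> shift n O2) \<inter> {1..n+j} = O1 \<union> shift n (O2 \<inter> {1..j})"
proof (intro equalityI subsetI)
  fix x assume "x \<in> (O1 \<union> shift n O2) \<inter> {1..n+j}"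
  then show "x \<in> O1 \<union> shift n (O2 \<inter> {1..j})" using assms by (auto simp: shift_mem)
next
  fix x assume x: "x \<in> O1 \<union> shift n (O2 \<inter> {1..j})"
  show "x \<in> (O1 \<union> shift n O2) \<inter> {1..n+j}"
  proof (cases "x \<in> O1")
    case True then show ?thesis using assms by auto
  next
    case False then have "n \<le> x" "x - n \<in> O2" "1 \<le> x - n" "x - n \<le> j" using x by (auto simp: shift_mem)
    then show ?thesis by (auto simp: shift_mem)
  qed
qed

lemma dot_restr_mid:
  assumes "a \<in> Tops" "b \<in> Tops" "j \<le> fst b"
  shows "restr (dot_top a b) (fst a + j) = dot_top a (restr b j)"
proof -
  obtain n T n' T' where ab: "a = (n,T)" "b = (n',T')" by fastforce
  have t: "is_topology n T" "is_topology n' T'" using assms ab by (auto simp: Tops_def)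
  have "(\<lambda>O'. O' \<inter> {1..n+j}) ` {O1 \<union> shift n O2 | O1 O2. O1 \<in> T \<and> O2 \<in> T'}
      = {O1 \<union> shift n O2 | O1 O2. O1 \<in> T \<and> O2 \<in> (\<lambda>O'. O' \<inter> {1..j}) ` T'}"
  proof (intro equalityI subsetI)
    fix X assume "X \<in> (\<lambda>O'. O' \<inter> {1..n+j}) ` {O1 \<union> shift n O2 | O1 O2. O1 \<in> T \<and> O2 \<in> T'}"
    then obtain O1 O2 where o: "O1 \<in> T" "O2 \<in> T'" "X = (O1 \<union> shift n O2) \<inter> {1..n+j}" by blast
    then have "X = O1 \<union> shift n (O2 \<inter> {1..j})" using cut_lem[OF top_sub[OF t(1) o(1)] top_sub[OF t(2) o(2)]] by blast
    then show "X \<in> {O1 \<union> shift n O2 | O1 O2. O1 \<in> T \<and> O2 \<in> (\<lambda>O'. O' \<inter> {1..j}) ` T'}" using o by blast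
  next
    fix X assume "X \<in> {O1 \<union> shift n O2 | O1 O2. O1 \<in> T \<and> O2 \<in> (\<lambda>O'. O' \<inter> {1..j}) ` T'}"
    then obtain O1 O2 where o: "O1 \<in> T" "O2 \<in> T'" "X = O1 \<union> shift n (O2 \<inter> {1..j})" by blast
    then have "X = (O1 \<union> shift n O2) \<inter> {1..n+j}" using cut_lem[OF top_sub[OF t(1) o(1)] top_sub[OF t(2) o(2)]] by blast
    then show "X \<in> (\<lambda>O'. O' \<inter> {1..n+j}) ` {O1 \<union> shift n O2 | O1 O2. O1 \<in> T \<and> O2 \<in> T'}" using o by blast
  qed
  then show ?thesis by (simp add: ab restr_def dot_top_def)
qed

lemma down_restr_left:
  assumes "a \<in> Tops" "b \<in> Tops" shows "restr (down_top a b) (fst a) = a"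
proof -
  obtain n T n' T' where ab: "a = (n,T)" "b = (n',T')" by fastforce
  have t: "is_topology n T" "is_topology n' T'" using assms ab by (auto simp: Tops_def)
  note ch = down_char[OF t]
  let ?R = "{O1 \<union> shift n {1..n'} | O1. O1 \<in> T} \<union> {shift n O2 | O2. O2 \<in> T'}"
  have "(\<lambda>O'. O' \<inter> {1..n}) ` ?R = T"
  proof
    show "(\<lambda>O'. O' \<inter> {1..n}) ` ?R \<subseteq> T"
    proof (rule image_subsetI)
      fix X assume "X \<in> ?R" from ch[THEN iffD1, OF this] show "X \<inter> {1..n} \<in> T" by simp
    qed
    show "T \<subseteq> (\<lambda>O'. O' \<inter> {1..n}) ` ?R"
    proof
      fix O1 assume o: "O1 \<in> T"
      then have h1: "O1 \<union> shift n {1..n'} \<in> ?R" by blast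
      have h2: "(O1 \<union> shift n {1..n'}) \<inter> {1..n} = O1"
        using parts[of O1 n "{1..n'}" n'] top_sub[OF t(1) o] by simp
      show "O1 \<in> (\<lambda>O'. O' \<inter> {1..n}) ` ?R" by (rule image_eqI[where f="\<lambda>O'. O' \<inter> {1..n}", OF h2[symmetric] h1])
    qed
  qed
  moreover have "down_top a b = (n+n', ?R)" by (simp add: ab down_top_def)
  ultimately show ?thesis unfolding restr_def by (simp only: ab fst_conv snd_conv)
qed

lemma down_rrest:
  assumes "a \<in> Tops" "b \<in> Tops" shows "rrest (down_top a b) (fst a) = b"
proof -
  obtain n T n' T' where ab: "a = (n,T)" "b = (n',T')" by fastforce
  have t: "is_topology n T" "is_topology n' T'" using assms ab by (auto simp: Tops_def)
  note ch = down_char[OF t]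
  let ?R = "{O1 \<union> shift n {1..n'} | O1. O1 \<in> T} \<union> {shift n O2 | O2. O2 \<in> T'}"
  have "ush n ` ?R = T'"
  proof
    show "ush n ` ?R \<subseteq> T'"
    proof (rule image_subsetI)
      fix X assume "X \<in> ?R" from ch[THEN iffD1, OF this] show "ush n X \<in> T'" by simp
    qed
    show "T' \<subseteq> ush n ` ?R"
    proof
      fix O2 assume o: "O2 \<in> T'"
      then have h1: "{} \<union> shift n O2 \<in> ?R" by blast
      have h2: "ush n ({} \<union> shift n O2) = O2"
        using parts[of "{}" n O2 n'] top_sub[OF t(2) o] by simp
      show "O2 \<in> ush n ` ?R" by (rule image_eqI[where f="ush n", OF h2[symmetric] h1])
    qed
  qed
  moreover have "down_top a b = (n+n', ?R)" by (simp add: ab down_top_def)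
  ultimately show ?thesis unfolding rrest_def by (simp only: ab fst_conv snd_conv add_diff_cancel_left')
qed

lemma down_restr_mid:
  assumes "a \<in> Tops" "b \<in> Tops" "j \<le> fst b"
  shows "restr (down_top a b) (fst a + j) = down_top a (restr b j)"
proof -
  obtain n T n' T' where ab: "a = (n,T)" "b = (n',T')" by fastforce
  have t: "is_topology n T" "is_topology n' T'" using assms ab by (auto simp: Tops_def)
  have j: "{1..n'} \<inter> {1..j} = {1..j}" using assms ab by auto
  have "(\<lambda>O'. O' \<inter> {1..n+j}) ` ({O1 \<union> shift n {1..n'} | O1. O1 \<in> T} \<union> {shift n O2 | O2. O2 \<in> T'})
      = {O1 \<union> shift n {1..j} | O1. O1 \<in> T} \<union> {shift n O2 | O2. O2 \<in> (\<lambda>O'. O' \<inter> {1..j}) ` T'}"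
  proof (intro equalityI subsetI)
    fix X assume "X \<in> (\<lambda>O'. O' \<inter> {1..n+j}) ` ({O1 \<union> shift n {1..n'} | O1. O1 \<in> T} \<union> {shift n O2 | O2. O2 \<in> T'})"
    then obtain Y where Y: "X = Y \<inter> {1..n+j}" "Y \<in> {O1 \<union> shift n {1..n'} | O1. O1 \<in> T} \<union> {shift n O2 | O2. O2 \<in> T'}" by blast
    from Y(2) show "X \<in> {O1 \<union> shift n {1..j} | O1. O1 \<in> T} \<union> {shift n O2 | O2. O2 \<in> (\<lambda>O'. O' \<inter> {1..j}) ` T'}"
    proof
      assume "Y \<in> {O1 \<union> shift n {1..n'} | O1. O1 \<in> T}"
      then obtain O1 where o: "O1 \<in> T" "Y = O1 \<union> shift n {1..n'}" by blast
      then have "X = O1 \<union> shift n {1..j}" using cut_lem[OF top_sub[OF t(1) o(1)], of "{1..n'}" n' j, unfolded j] Y(1) by simp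
      then show ?thesis using o by blast
    next
      assume "Y \<in> {shift n O2 | O2. O2 \<in> T'}"
      then obtain O2 where o: "O2 \<in> T'" "Y = {} \<union> shift n O2" by blast
      then have "X = {} \<union> shift n (O2 \<inter> {1..j})" using cut_lem[OF _ top_sub[OF t(2) o(1)], of "{}" n j] Y(1) by simp
      then show ?thesis using o by blast
    qed
  next
    fix X assume "X \<in> {O1 \<union> shift n {1..j} | O1. O1 \<in> T} \<union> {shift n O2 | O2. O2 \<in> (\<lambda>O'. O' \<inter> {1..j}) ` T'}"
    then show "X \<in> (\<lambda>O'. O' \<inter> {1..n+j}) ` ({O1 \<union> shift n {1..n'} | O1. O1 \<in> T} \<union> {shift n O2 | O2. O2 \<in> T'})"
    proof
      assume "X \<in> {O1 \<union> shift n {1..j} | O1. O1 \<in> T}"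
      then obtain O1 where o: "O1 \<in> T" "X = O1 \<union> shift n {1..j}" by blast
      then have "X = (O1 \<union> shift n {1..n'}) \<inter> {1..n+j}" using cut_lem[OF top_sub[OF t(1) o(1)], of "{1..n'}" n' j, unfolded j] by simp
      then show ?thesis using o by blast
    next
      assume "X \<in> {shift n O2 | O2. O2 \<in> (\<lambda>O'. O' \<inter> {1..j}) ` T'}"
      then obtain O2 where o: "O2 \<in> T'" "X = {} \<union> shift n (O2 \<inter> {1..j})" by blast
      then have "X = ({} \<union> shift n O2) \<inter> {1..n+j}" using cut_lem[OF _ top_sub[OF t(2) o(1)], of "{}" n j] by simp
      then show ?thesis using o by blast
    qed
  qed
  then show ?thesis by (simp add: ab restr_def down_top_def)
qed


lemma shift_Un: "shift n (A \<union> B) = shift n A \<union> shift n B" by (auto simp: shift_def)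
lemma shift_shift: "shift n (shift m A) = shift (n+m) A"
  by (auto simp: shift_def image_image add.assoc add.commute[of m n])
lemma shift_iv: "shift n {1..m} \<union> shift (n+m) {1..k} = shift n {1..m+k}"
  by (auto simp: shift_mem)

lemma dot_assoc: "dot_top (dot_top a b) c = dot_top a (dot_top b c)"
proof -
  obtain n1 T1 n2 T2 n3 T3 where abc: "a = (n1,T1)" "b = (n2,T2)" "c = (n3,T3)" by (metis surj_pair)
  have "{X \<union> shift (n1+n2) O3 | X O3. X \<in> {O1 \<union> shift n1 O2 | O1 O2. O1 \<in> T1 \<and> O2 \<in> T2} \<and> O3 \<in> T3}
      = {O1 \<union> shift n1 Y | O1 Y. O1 \<in> T1 \<and> Y \<in> {O2 \<union> shift n2 O3 | O2 O3. O2 \<in> T2 \<and> O3 \<in> T3}}"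
    (is "?L = ?R")
  proof (intro equalityI subsetI)
    fix Z assume "Z \<in> ?L"
    then obtain O1 O2 O3 where o: "O1 \<in> T1" "O2 \<in> T2" "O3 \<in> T3" "Z = O1 \<union> shift n1 O2 \<union> shift (n1+n2) O3" by blast
    then have "Z = O1 \<union> shift n1 (O2 \<union> shift n2 O3)" by (simp add: shift_Un shift_shift Un_assoc)
    then show "Z \<in> ?R" using o by blast
  next
    fix Z assume "Z \<in> ?R"
    then obtain O1 O2 O3 where o: "O1 \<in> T1" "O2 \<in> T2" "O3 \<in> T3" "Z = O1 \<union> shift n1 (O2 \<union> shift n2 O3)" by blast
    then have "Z = (O1 \<union> shift n1 O2) \<union> shift (n1+n2) O3" by (simp add: shift_Un shift_shift Un_assoc)
    then show "Z \<in> ?L" using o by blast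
  qed
  then show ?thesis by (simp add: abc dot_top_def add.assoc)
qed

lemma down_assoc: "down_top (down_top a b) c = down_top a (down_top b c)"
proof -
  obtain n1 T1 n2 T2 n3 T3 where abc: "a = (n1,T1)" "b = (n2,T2)" "c = (n3,T3)" by (metis surj_pair)
  have "{X \<union> shift (n1+n2) {1..n3} | X. X \<in> {O1 \<union> shift n1 {1..n2} | O1. O1 \<in> T1} \<union> {shift n1 O2 | O2. O2 \<in> T2}}
        \<union> {shift (n1+n2) O3 | O3. O3 \<in> T3}
      = {O1 \<union> shift n1 {1..n2+n3} | O1. O1 \<in> T1} \<union>
        {shift n1 Y | Y. Y \<in> {O2 \<union> shift n2 {1..n3} | O2. O2 \<in> T2} \<union> {shift n2 O3 | O3. O3 \<in> T3}}"
    (is "?L = ?R")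
  proof (intro equalityI subsetI)
    fix Z assume "Z \<in> ?L"
    then consider (A) O1 where "O1 \<in> T1" "Z = O1 \<union> shift n1 {1..n2} \<union> shift (n1+n2) {1..n3}"
      | (B) O2 where "O2 \<in> T2" "Z = shift n1 O2 \<union> shift (n1+n2) {1..n3}"
      | (C) O3 where "O3 \<in> T3" "Z = shift (n1+n2) O3" by blast
    then show "Z \<in> ?R"
    proof cases
      case A
      then have "Z = O1 \<union> shift n1 {1..n2+n3}" using shift_iv by (simp add: Un_assoc)
      then show ?thesis using A by blast
    next
      case B
      then have "Z = shift n1 (O2 \<union> shift n2 {1..n3})" by (simp add: shift_Un shift_shift)
      then show ?thesis using B by blast
    next
      case C
      then have "Z = shift n1 (shift n2 O3)" by (simp add: shift_shift)
      then show ?thesis using C by blast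
    qed
  next
    fix Z assume "Z \<in> ?R"
    then consider (A) O1 where "O1 \<in> T1" "Z = O1 \<union> shift n1 {1..n2+n3}"
      | (B) O2 where "O2 \<in> T2" "Z = shift n1 (O2 \<union> shift n2 {1..n3})"
      | (C) O3 where "O3 \<in> T3" "Z = shift n1 (shift n2 O3)" by blast
    then show "Z \<in> ?L"
    proof cases
      case A
      then have "Z = (O1 \<union> shift n1 {1..n2}) \<union> shift (n1+n2) {1..n3}" using shift_iv by (simp add: Un_assoc)
      then show ?thesis using A by blast
    next
      case B
      then have "Z = shift n1 O2 \<union> shift (n1+n2) {1..n3}" by (simp add: shift_Un shift_shift)
      then show ?thesis using B by blast
    next
      case C
      then have "Z = shift (n1+n2) O3" by (simp add: shift_shift)
      then show ?thesis using C by blast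
    qed
  qed
  then show ?thesis by (simp add: abc down_top_def add.assoc)
qed

lemma shift0[simp]: "shift 0 A = A" by (simp add: shift_def)

lemma dot_unit_left: "dot_top unit_top a = a"
  by (cases a) (simp add: dot_top_def unit_top_def)
lemma dot_unit_right: "dot_top a unit_top = a"
  by (cases a) (simp add: dot_top_def unit_top_def)

lemma down_unit_left: assumes "a \<in> Tops" shows "down_top unit_top a = a"
proof -
  obtain n T where a: "a = (n,T)" by fastforce
  have t: "is_topology n T" using assms a by (auto simp: Tops_def)
  have "{{} \<union> shift 0 {1..n} |O1. O1 \<in> {{}}} \<union> {shift 0 O2 |O2. O2 \<in> T} = T"
    using top_full[OF t] by auto
  then show ?thesis by (simp add: a down_top_def unit_top_def)
qed
lemma down_unit_right: assumes "a \<in> Tops" shows "down_top a unit_top = a"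
proof -
  obtain n T where a: "a = (n,T)" by fastforce
  have t: "is_topology n T" using assms a by (auto simp: Tops_def)
  have "{O1 \<union> shift n {1..0} |O1. O1 \<in> T} \<union> {shift n O2 |O2. O2 \<in> {{}}} = T"
    using top_empty[OF t] by auto
  then show ?thesis by (simp add: a down_top_def unit_top_def)
qed

lemma Tops_pos: "t \<in> Tops \<Longrightarrow> t \<noteq> unit_top \<Longrightarrow> 0 < fst t"
  using Tops_fst0 by blast

lemma dot_ne_down:
  assumes "a \<in> Tops" "b \<in> Tops" "c \<in> Tops" "d \<in> Tops"
    "a \<noteq> unit_top" "b \<noteq> unit_top" "c \<noteq> unit_top" "d \<noteq> unit_top"
  shows "dot_top a b \<noteq> down_top c d"
proof
  assume eq: "dot_top a b = down_top c d"
  obtain n1 T1 n2 T2 n3 T3 n4 T4 where abcd: "a = (n1,T1)" "b = (n2,T2)" "c = (n3,T3)" "d = (n4,T4)"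
    by (metis surj_pair)
  have t: "is_topology n1 T1" "is_topology n2 T2" "is_topology n3 T3" "is_topology n4 T4"
    using assms abcd by (auto simp: Tops_def)
  have pos: "0 < n1" "0 < n2" "0 < n3" "0 < n4" using Tops_pos assms abcd by fastforce+
  have "{1..n1} \<union> shift n1 {} \<in> {O1 \<union> shift n1 O2 | O1 O2. O1 \<in> T1 \<and> O2 \<in> T2}"
    using top_full[OF t(1)] top_empty[OF t(2)] by blast
  then have "{1..n1} \<in> snd (dot_top a b)" by (simp add: abcd dot_top_def)
  then have "{1..n1} \<in> {O1 \<union> shift n3 {1..n4} | O1. O1 \<in> T3} \<union> {shift n3 O2 | O2. O2 \<in> T4}"
    unfolding eq by (simp add: abcd down_top_def)
  moreover have "n1 + n2 = n3 + n4" using eq abcd by (metis fst_dot fst_down fst_conv)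
  ultimately show False
  proof (elim UnE)
    assume "{1..n1} \<in> {O1 \<union> shift n3 {1..n4} | O1. O1 \<in> T3}" "n1 + n2 = n3 + n4"
    then obtain O1 where o: "{1..n1} = O1 \<union> shift n3 {1..n4}" by blast
    have "n3 + n4 \<in> shift n3 {1..n4}" using pos by (simp add: shift_mem)
    then have "n3 + n4 \<in> {1..n1}" unfolding o by blast
    then show False using \<open>n1 + n2 = n3 + n4\<close> pos by auto
  next
    assume "{1..n1} \<in> {shift n3 O2 | O2. O2 \<in> T4}"
    then obtain O2 where o: "O2 \<in> T4" "{1..n1} = shift n3 O2" by blast
    have "1 \<in> {1..n1}" using pos by auto
    then have "n3 \<le> 1" "1 - n3 \<in> O2" using o by (auto simp: shift_mem)
    then show False using top_sub[OF t(4) o(1)] pos by auto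
  qed
qed


locale tprod =
  fixes P :: "top \<Rightarrow> top \<Rightarrow> top"
  assumes closed: "a \<in> Tops \<Longrightarrow> b \<in> Tops \<Longrightarrow> P a b \<in> Tops"
    and sz: "fst (P a b) = fst a + fst b"
    and assoc: "P (P a b) c = P a (P b c)"
    and rl: "a \<in> Tops \<Longrightarrow> b \<in> Tops \<Longrightarrow> restr (P a b) (fst a) = a"
    and rr: "a \<in> Tops \<Longrightarrow> b \<in> Tops \<Longrightarrow> rrest (P a b) (fst a) = b"
    and rm: "a \<in> Tops \<Longrightarrow> b \<in> Tops \<Longrightarrow> j \<le> fst b \<Longrightarrow> restr (P a b) (fst a + j) = P a (restr b j)"
begin

definition dec :: "top \<Rightarrow> bool" where
  "dec t \<longleftrightarrow> (\<exists>t1\<in>Tops. \<exists>t2\<in>Tops. t1 \<noteq> unit_top \<and> t2 \<noteq> unit_top \<and> t = P t1 t2)"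
definition ind :: "top \<Rightarrow> bool" where
  "ind t \<longleftrightarrow> t \<in> Tops \<and> t \<noteq> unit_top \<and> \<not> dec t"
definition spl :: "top \<Rightarrow> top \<times> top" where
  "spl t = (SOME (x,y). x \<in> Tops \<and> y \<in> Tops \<and> ind x \<and> y \<noteq> unit_top \<and> t = P x y)"

lemma nonunit_P: "a \<in> Tops \<Longrightarrow> a \<noteq> unit_top \<Longrightarrow> P a b \<noteq> unit_top"
  using Tops_pos[of a] sz[of a b] by (metis add_gr_0 fst_unit less_numeral_extra(3))
lemma nonunit_P2: "b \<in> Tops \<Longrightarrow> b \<noteq> unit_top \<Longrightarrow> P a b \<noteq> unit_top"
  using Tops_pos[of b] sz[of a b] by (metis add_gr_0 fst_unit less_numeral_extra(3))

lemma cancel_le: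
  assumes "ind a" "ind c" "b \<in> Tops" "d \<in> Tops" "P a b = P c d" "fst a \<le> fst c"
  shows "a = c \<and> b = d"
proof -
  have a: "a \<in> Tops" "a \<noteq> unit_top" and c: "c \<in> Tops" "c \<noteq> unit_top" "\<not> dec c"
    using assms(1,2) by (auto simp: ind_def)
  have e: "fst a + fst b = fst c + fst d" using assms(5) sz by metis
  have "fst a = fst c"
  proof (rule ccontr)
    assume "fst a \<noteq> fst c"
    then have lt: "fst a < fst c" using assms(6) by simp
    define j where "j = fst c - fst a"
    have j: "j \<le> fst b" "0 < j" using e lt by (auto simp: j_def)
    have "c = restr (P c d) (fst c)" using rl[OF c(1) assms(4)] by simp
    also have "\<dots> = restr (P a b) (fst a + j)" using assms(5) lt by (simp add: j_def)
    also have "\<dots> = P a (restr b j)" using rm[OF a(1) assms(3) j(1)] .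
    finally have "c = P a (restr b j)" .
    moreover have "restr b j \<in> Tops" using restr_Tops[OF assms(3) j(1)] .
    moreover have "restr b j \<noteq> unit_top" using j(2) by (metis fst_restr fst_unit less_numeral_extra(3))
    ultimately have "dec c" using a unfolding dec_def by blast
    then show False using c(3) by simp
  qed
  then have "a = c" using rl[OF a(1) assms(3)] rl[OF c(1) assms(4)] assms(5) by metis
  moreover have "b = d" using rr[OF a(1) assms(3)] rr[OF c(1) assms(4)] assms(5) \<open>fst a = fst c\<close> by metis
  ultimately show ?thesis by simp
qed

lemma cancel:
  assumes "ind a" "ind c" "b \<in> Tops" "d \<in> Tops" "P a b = P c d"
  shows "a = c \<and> b = d"
  using cancel_le[OF assms] cancel_le[OF assms(2,1,4,3) assms(5)[symmetric]] nat_le_linear by metis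

lemma split_ex_aux:
  "\<forall>t1 t2. fst t1 = k \<longrightarrow> t1 \<in> Tops \<longrightarrow> t1 \<noteq> unit_top \<longrightarrow> t2 \<in> Tops \<longrightarrow> t2 \<noteq> unit_top \<longrightarrow>
     (\<exists>x y. x \<in> Tops \<and> y \<in> Tops \<and> ind x \<and> y \<noteq> unit_top \<and> P t1 t2 = P x y)"
proof (induction k rule: less_induct)
  case (less k)
  show ?case
  proof (intro allI impI)
    fix t1 t2 assume h: "fst t1 = k" "t1 \<in> Tops" "t1 \<noteq> unit_top" "t2 \<in> Tops" "t2 \<noteq> unit_top"
    show "\<exists>x y. x \<in> Tops \<and> y \<in> Tops \<and> ind x \<and> y \<noteq> unit_top \<and> P t1 t2 = P x y"
    proof (cases "ind t1")
      case True then show ?thesis using h by blast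
    next
      case False
      then have "dec t1" using h by (simp add: ind_def)
      then obtain s1 s2 where s: "s1 \<in> Tops" "s2 \<in> Tops" "s1 \<noteq> unit_top" "s2 \<noteq> unit_top" "t1 = P s1 s2"
        unfolding dec_def by blast
      have "fst s1 < k" using h(1) s sz[of s1 s2] Tops_pos[of s2] by simp
      then obtain x y where xy: "x \<in> Tops" "y \<in> Tops" "ind x" "y \<noteq> unit_top" "P s1 s2 = P x y"
        using less.IH s by blast
      have "P t1 t2 = P x (P y t2)" using s(5) xy(5) assoc by simp
      moreover have "P y t2 \<in> Tops" "P y t2 \<noteq> unit_top" using closed xy h nonunit_P by auto
      ultimately show ?thesis using xy by blast
    qed
  qed
qed

lemma split_ex:
  assumes "dec t" shows "\<exists>x y. x \<in> Tops \<and> y \<in> Tops \<and> ind x \<and> y \<noteq> unit_top \<and> t = P x y"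
proof -
  obtain t1 t2 where "t1 \<in> Tops" "t2 \<in> Tops" "t1 \<noteq> unit_top" "t2 \<noteq> unit_top" "t = P t1 t2"
    using assms unfolding dec_def by blast
  then show ?thesis using split_ex_aux by metis
qed

lemma spl:
  assumes "dec t"
  shows "fst (spl t) \<in> Tops \<and> snd (spl t) \<in> Tops \<and> ind (fst (spl t)) \<and> snd (spl t) \<noteq> unit_top
         \<and> t = P (fst (spl t)) (snd (spl t))"
proof -
  have "\<exists>p. (\<lambda>(x,y). x \<in> Tops \<and> y \<in> Tops \<and> ind x \<and> y \<noteq> unit_top \<and> t = P x y) p"
    using split_ex[OF assms] by auto
  then have "(\<lambda>(x,y). x \<in> Tops \<and> y \<in> Tops \<and> ind x \<and> y \<noteq> unit_top \<and> t = P x y) (spl t)"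
    unfolding spl_def by (rule someI_ex)
  then show ?thesis by (simp add: case_prod_beta)
qed

lemma spl_lt:
  assumes "dec t" shows "fst (fst (spl t)) < fst t" "fst (snd (spl t)) < fst t"
proof -
  note h = spl[OF assms]
  have "fst t = fst (fst (spl t)) + fst (snd (spl t))" using h sz by metis
  moreover have "0 < fst (fst (spl t))" "0 < fst (snd (spl t))"
    using h Tops_pos by (auto simp: ind_def)
  ultimately show "fst (fst (spl t)) < fst t" "fst (snd (spl t)) < fst t" by auto
qed

lemma dec_P: "x \<in> Tops \<Longrightarrow> y \<in> Tops \<Longrightarrow> x \<noteq> unit_top \<Longrightarrow> y \<noteq> unit_top \<Longrightarrow> dec (P x y)"
  unfolding dec_def by blast

lemma spl_P:
  assumes "ind x" "y \<in> Tops" "y \<noteq> unit_top" shows "spl (P x y) = (x, y)"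
proof -
  have "dec (P x y)" using assms dec_P by (auto simp: ind_def)
  note h = spl[OF this]
  have "fst (spl (P x y)) = x \<and> snd (spl (P x y)) = y"
    using cancel[OF h[THEN conjunct2, THEN conjunct2, THEN conjunct1] assms(1)] h assms(2) by metis
  then show ?thesis by (simp add: prod_eq_iff)
qed

end

interpretation D: tprod dot_top
  by unfold_locales (auto simp: dot_Tops dot_assoc dot_restr_left dot_rrest dot_restr_mid)
interpretation W: tprod down_top
  by unfold_locales (auto simp: down_Tops down_assoc down_restr_left down_rrest down_restr_mid)

lemma D_ind: "D.ind = indecomposable"
  by (auto simp: fun_eq_iff indecomposable_def D.ind_def D.dec_def)
lemma W_ind: "W.ind = down_indecomposable"
  by (auto simp: fun_eq_iff down_indecomposable_def W.ind_def W.dec_def)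

lemma not_both: "W.dec t \<Longrightarrow> \<not> D.dec t"
  unfolding W.dec_def D.dec_def using dot_ne_down by metis


function phi0 :: "bool \<Rightarrow> bool \<Rightarrow> (top \<Rightarrow> 'a) \<Rightarrow> ('a \<Rightarrow> 'a \<Rightarrow> 'a) \<Rightarrow> ('a \<Rightarrow> 'a \<Rightarrow> 'a) \<Rightarrow> 'a \<Rightarrow> top \<Rightarrow> 'a" where
  "phi0 b1 b2 a m1 m2 u t = (if t \<notin> Tops \<or> t = unit_top then u
     else if b1 \<and> D.dec t then m1 (phi0 b1 b2 a m1 m2 u (fst (D.spl t))) (phi0 b1 b2 a m1 m2 u (snd (D.spl t)))
     else if b2 \<and> W.dec t then m2 (phi0 b1 b2 a m1 m2 u (fst (W.spl t))) (phi0 b1 b2 a m1 m2 u (snd (W.spl t)))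
     else a t)"
  by pat_completeness auto
termination
  by (relation "measure (\<lambda>(b1,b2,a,m1,m2,u,t). fst t)") (auto intro: D.spl_lt W.spl_lt)

declare phi0.simps[simp del]

context
  fixes b1 b2 :: bool and a :: "top \<Rightarrow> 'a" and m1 m2 :: "'a \<Rightarrow> 'a \<Rightarrow> 'a" and u :: 'a
begin

abbreviation "pf \<equiv> phi0 b1 b2 a m1 m2 u"

lemma phi0_unit: "pf unit_top = u" by (subst phi0.simps) simp
lemma phi0_1: "t \<in> Tops \<Longrightarrow> t \<noteq> unit_top \<Longrightarrow> b1 \<Longrightarrow> D.dec t \<Longrightarrow>
   pf t = m1 (pf (fst (D.spl t))) (pf (snd (D.spl t)))" by (subst phi0.simps) simp
lemma phi0_2: assumes "t \<in> Tops" "t \<noteq> unit_top" "\<not> (b1 \<and> D.dec t)" "b2" "W.dec t"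
  shows "pf t = m2 (pf (fst (W.spl t))) (pf (snd (W.spl t)))"
proof -
  have c: "\<not> (t \<notin> Tops \<or> t = unit_top)" "(b2 \<and> W.dec t) = True" using assms by auto
  show ?thesis by (subst phi0.simps) (simp only: c assms(3) if_False if_True)
qed
lemma phi0_3: assumes "t \<in> Tops" "t \<noteq> unit_top" "\<not> (b1 \<and> D.dec t)" "\<not> (b2 \<and> W.dec t)"
  shows "pf t = a t"
proof -
  have c: "\<not> (t \<notin> Tops \<or> t = unit_top)" using assms by auto
  show ?thesis by (subst phi0.simps) (simp only: c assms(3,4) if_False)
qed

lemma phi0_hom1:
  assumes b1 and m1a: "\<And>x y z. m1 (m1 x y) z = m1 x (m1 y z)"
    and m1l: "\<And>x. m1 u x = x" and m1r: "\<And>x. m1 x u = x"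
  shows "x \<in> Tops \<Longrightarrow> y \<in> Tops \<Longrightarrow> pf (dot_top x y) = m1 (pf x) (pf y)"
proof (induction "fst x" arbitrary: x rule: less_induct)
  case less
  show ?case
  proof (cases "x = unit_top \<or> y = unit_top")
    case True
    then show ?thesis
    proof
      assume "x = unit_top" then have "dot_top x y = y" by (simp add: dot_unit_left)
      then show ?thesis using \<open>x = unit_top\<close> phi0_unit m1l by simp
    next
      assume "y = unit_top" then have "dot_top x y = x" by (simp add: dot_unit_right)
      then show ?thesis using \<open>y = unit_top\<close> phi0_unit m1r by simp
    qed
  next
    case False
    then have nx: "x \<noteq> unit_top" and ny: "y \<noteq> unit_top" by auto
    let ?t = "dot_top x y"
    have t: "?t \<in> Tops" "?t \<noteq> unit_top" "D.dec ?t"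
      using D.closed D.nonunit_P D.dec_P less.prems nx ny by auto
    have ft: "pf ?t = m1 (pf (fst (D.spl ?t))) (pf (snd (D.spl ?t)))" using phi0_1[OF t(1,2) \<open>b1\<close> t(3)] .
    show ?thesis
    proof (cases "D.ind x")
      case True
      then have "D.spl ?t = (x, y)" using D.spl_P less.prems ny by blast
      then show ?thesis using ft by simp
    next
      case False
      then have dx: "D.dec x" using less.prems nx by (simp add: D.ind_def)
      note sx = D.spl[OF dx]
      define x1 where "x1 = fst (D.spl x)"
      define x2 where "x2 = snd (D.spl x)"
      have x12: "x1 \<in> Tops" "x2 \<in> Tops" "D.ind x1" "x2 \<noteq> unit_top" "x = dot_top x1 x2"
        using sx by (auto simp: x1_def x2_def)
      have fx: "pf x = m1 (pf x1) (pf x2)" unfolding x1_def x2_def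
        using phi0_1[OF less.prems(1) nx \<open>b1\<close> dx] .
      have "?t = dot_top x1 (dot_top x2 y)" using x12(5) dot_assoc by simp
      moreover have "dot_top x2 y \<in> Tops" "dot_top x2 y \<noteq> unit_top"
        using x12 less.prems D.closed D.nonunit_P by auto
      ultimately have "D.spl ?t = (x1, dot_top x2 y)" using D.spl_P x12(3) by metis
      then have "pf ?t = m1 (pf x1) (pf (dot_top x2 y))" using ft by simp
      also have "pf (dot_top x2 y) = m1 (pf x2) (pf y)"
        using less.hyps[of x2] D.spl_lt[OF dx] x12(2) less.prems(2) by (simp add: x2_def)
      finally show ?thesis using fx m1a by simp
    qed
  qed
qed

lemma phi0_hom2:
  assumes b2 and m2a: "\<And>x y z. m2 (m2 x y) z = m2 x (m2 y z)"
    and m2l: "\<And>x. m2 u x = x" and m2r: "\<And>x. m2 x u = x"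
  shows "x \<in> Tops \<Longrightarrow> y \<in> Tops \<Longrightarrow> pf (down_top x y) = m2 (pf x) (pf y)"
proof (induction "fst x" arbitrary: x rule: less_induct)
  case less
  show ?case
  proof (cases "x = unit_top \<or> y = unit_top")
    case True
    then show ?thesis
    proof
      assume "x = unit_top" then have "down_top x y = y" using down_unit_left less.prems by simp
      then show ?thesis using \<open>x = unit_top\<close> phi0_unit m2l by simp
    next
      assume "y = unit_top" then have "down_top x y = x" using down_unit_right less.prems by simp
      then show ?thesis using \<open>y = unit_top\<close> phi0_unit m2r by simp
    qed
  next
    case False
    then have nx: "x \<noteq> unit_top" and ny: "y \<noteq> unit_top" by auto
    let ?t = "down_top x y"
    have t: "?t \<in> Tops" "?t \<noteq> unit_top" "W.dec ?t"
      using W.closed W.nonunit_P W.dec_P less.prems nx ny by auto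
    have ft: "pf ?t = m2 (pf (fst (W.spl ?t))) (pf (snd (W.spl ?t)))"
      using phi0_2[OF t(1,2) _ \<open>b2\<close> t(3)] not_both[OF t(3)] by blast
    show ?thesis
    proof (cases "W.ind x")
      case True
      then have "W.spl ?t = (x, y)" using W.spl_P less.prems ny by blast
      then show ?thesis using ft by simp
    next
      case False
      then have dx: "W.dec x" using less.prems nx by (simp add: W.ind_def)
      note sx = W.spl[OF dx]
      define x1 where "x1 = fst (W.spl x)"
      define x2 where "x2 = snd (W.spl x)"
      have x12: "x1 \<in> Tops" "x2 \<in> Tops" "W.ind x1" "x2 \<noteq> unit_top" "x = down_top x1 x2"
        using sx by (auto simp: x1_def x2_def)
      have fx: "pf x = m2 (pf x1) (pf x2)" unfolding x1_def x2_def
        using phi0_2[OF less.prems(1) nx _ \<open>b2\<close> dx] not_both[OF dx] by blast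
      have "?t = down_top x1 (down_top x2 y)" using x12(5) down_assoc by simp
      moreover have "down_top x2 y \<in> Tops" "down_top x2 y \<noteq> unit_top"
        using x12 less.prems W.closed W.nonunit_P by auto
      ultimately have "W.spl ?t = (x1, down_top x2 y)" using W.spl_P x12(3) by metis
      then have "pf ?t = m2 (pf x1) (pf (down_top x2 y))" using ft by simp
      also have "pf (down_top x2 y) = m2 (pf x2) (pf y)"
        using less.hyps[of x2] W.spl_lt[OF dx] x12(2) less.prems(2) by (simp add: x2_def)
      finally show ?thesis using fx m2a by simp
    qed
  qed
qed

end


definition Phi :: "('k::field \<Rightarrow> 'a::ab_group_add \<Rightarrow> 'a) \<Rightarrow> (top \<Rightarrow> 'a) \<Rightarrow> 'k hvec \<Rightarrow> 'a" where
  "Phi sc g f = (\<Sum>t\<in>Poly_Mapping.keys f. sc (Poly_Mapping.lookup f t) (g t))"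

lemma lookup_hscale: "Poly_Mapping.lookup (hscale c f) t = c * Poly_Mapping.lookup f t"
  by (simp add: hscale_def map.rep_eq when_def)

lemma keys_hscale: "Poly_Mapping.keys (hscale c f) \<subseteq> Poly_Mapping.keys f"
  by (auto simp: in_keys_iff lookup_hscale)

locale kalg =
  fixes sc :: "'k::field \<Rightarrow> 'a::ab_group_add \<Rightarrow> 'a" and m :: "'a \<Rightarrow> 'a \<Rightarrow> 'a" and u :: 'a
  assumes ka: "k_algebra sc m u"
begin

lemma sc_addr: "sc c (x + y) = sc c x + sc c y" using ka unfolding k_algebra_def by simp
lemma sc_addl: "sc (c + d) x = sc c x + sc d x" using ka unfolding k_algebra_def by simp
lemma sc_mult: "sc (c * d) x = sc c (sc d x)" using ka unfolding k_algebra_def by simp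
lemma sc_one: "sc 1 x = x" using ka unfolding k_algebra_def by simp
lemma m_assoc: "m (m x y) z = m x (m y z)" using ka unfolding k_algebra_def by simp
lemma m_addl: "m (x + y) z = m x z + m y z" using ka unfolding k_algebra_def by simp
lemma m_addr: "m x (y + z) = m x y + m x z" using ka unfolding k_algebra_def by simp
lemma m_scl: "m (sc c x) y = sc c (m x y)" using ka unfolding k_algebra_def by simp
lemma m_scr: "m x (sc c y) = sc c (m x y)" using ka unfolding k_algebra_def by simp
lemma m_ul: "m u x = x" using ka unfolding k_algebra_def by simp
lemma m_ur: "m x u = x" using ka unfolding k_algebra_def by simp

lemma sc_comm: "sc c (sc d x) = sc d (sc c x)"
  by (metis sc_mult mult.commute)

lemma zero_from_double: "(z::'a) = z + z \<Longrightarrow> z = 0"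
  by (metis add_cancel_right_right)

lemma sc_zero_l: "sc 0 x = 0"
  by (rule zero_from_double) (use sc_addl[of 0 0 x] in simp)
lemma sc_zero_r: "sc c 0 = 0"
  by (rule zero_from_double) (use sc_addr[of c 0 0] in simp)
lemma m_zero_l: "m 0 y = 0"
  by (rule zero_from_double) (use m_addl[of 0 0 y] in simp)
lemma m_zero_r: "m x 0 = 0"
  by (rule zero_from_double) (use m_addr[of x 0 0] in simp)

lemma sc_sum_r: "sc c (sum g S) = (\<Sum>i\<in>S. sc c (g i))"
  using sum_comp_morphism[of "sc c" g S] sc_zero_r sc_addr by (simp add: o_def)
lemma m_sum_l: "m (sum g S) y = (\<Sum>i\<in>S. m (g i) y)"
  using sum_comp_morphism[of "\<lambda>x. m x y" g S] m_zero_l m_addl by (simp add: o_def)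
lemma m_sum_r: "m x (sum g S) = (\<Sum>i\<in>S. m x (g i))"
  using sum_comp_morphism[of "\<lambda>y. m x y" g S] m_zero_r m_addr by (simp add: o_def)

lemma Phi_superset:
  assumes "finite S" "Poly_Mapping.keys f \<subseteq> S"
  shows "Phi sc g f = (\<Sum>t\<in>S. sc (Poly_Mapping.lookup f t) (g t))"
  unfolding Phi_def
  by (rule sum.mono_neutral_left[OF assms]) (simp add: in_keys_iff sc_zero_l)

lemma Phi_add: "Phi sc g (f1 + f2) = Phi sc g f1 + Phi sc g f2"
proof -
  let ?S = "Poly_Mapping.keys f1 \<union> Poly_Mapping.keys f2"
  have "Phi sc g (f1 + f2) = (\<Sum>t\<in>?S. sc (Poly_Mapping.lookup (f1 + f2) t) (g t))"
    by (rule Phi_superset) (auto simp: keys_add)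
  also have "\<dots> = (\<Sum>t\<in>?S. sc (Poly_Mapping.lookup f1 t) (g t)) + (\<Sum>t\<in>?S. sc (Poly_Mapping.lookup f2 t) (g t))"
    by (simp add: lookup_add sc_addl sum.distrib)
  also have "\<dots> = Phi sc g f1 + Phi sc g f2"
    using Phi_superset[where S="?S" and f=f1 and g=g] Phi_superset[where S="?S" and f=f2 and g=g] by simp
  finally show ?thesis .
qed

lemma Phi_zero: "Phi sc g 0 = 0" by (simp add: Phi_def)

lemma Phi_sum: "Phi sc g (sum h S) = (\<Sum>i\<in>S. Phi sc g (h i))"
  using sum_comp_morphism[of "Phi sc g" h S] Phi_zero Phi_add by (simp add: o_def)

lemma Phi_single: "Phi sc g (Poly_Mapping.single t c) = sc c (g t)"
  by (cases "c = 0") (simp_all add: Phi_def sc_zero_l)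


lemma Phi_hscale: "Phi sc g (hscale c f) = sc c (Phi sc g f)"
proof -
  have "Phi sc g (hscale c f) = (\<Sum>t\<in>Poly_Mapping.keys f. sc (Poly_Mapping.lookup (hscale c f) t) (g t))"
    by (rule Phi_superset) (auto simp: keys_hscale)
  also have "\<dots> = sc c (Phi sc g f)"
    by (simp add: lookup_hscale sc_mult sc_sum_r Phi_def)
  finally show ?thesis .
qed

lemma Phi_basis: "Phi sc g (basis t) = g t"
  by (simp add: basis_def Phi_single sc_one)

lemma Phi_lin_prod:
  assumes "f1 \<in> HT" "f2 \<in> HT" "\<And>x y. x \<in> Tops \<Longrightarrow> y \<in> Tops \<Longrightarrow> g (P x y) = m (g x) (g y)"
  shows "Phi sc g (lin_prod P f1 f2) = m (Phi sc g f1) (Phi sc g f2)"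
proof -
  have k: "Poly_Mapping.keys f1 \<subseteq> Tops" "Poly_Mapping.keys f2 \<subseteq> Tops" using assms(1,2) by (auto simp: HT_def)
  have "Phi sc g (lin_prod P f1 f2) = (\<Sum>x\<in>Poly_Mapping.keys f1. \<Sum>y\<in>Poly_Mapping.keys f2.
      sc (Poly_Mapping.lookup f1 x * Poly_Mapping.lookup f2 y) (g (P x y)))"
    by (simp add: lin_prod_def Phi_sum Phi_single)
  also have "\<dots> = (\<Sum>x\<in>Poly_Mapping.keys f1. \<Sum>y\<in>Poly_Mapping.keys f2.
      m (sc (Poly_Mapping.lookup f1 x) (g x)) (sc (Poly_Mapping.lookup f2 y) (g y)))"
  proof (rule sum.cong[OF refl], rule sum.cong[OF refl])
    fix x y assume "x \<in> Poly_Mapping.keys f1" "y \<in> Poly_Mapping.keys f2"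
    then have "x \<in> Tops" "y \<in> Tops" using k by auto
    then show "sc (Poly_Mapping.lookup f1 x * Poly_Mapping.lookup f2 y) (g (P x y)) =
      m (sc (Poly_Mapping.lookup f1 x) (g x)) (sc (Poly_Mapping.lookup f2 y) (g y))"
      by (simp add: assms(3) sc_mult m_scl m_scr sc_comm)
  qed
  also have "\<dots> = m (Phi sc g f1) (Phi sc g f2)"
    by (simp add: Phi_def m_sum_l m_sum_r) (rule sum.swap)
  finally show ?thesis .
qed

lemma Phi_hom:
  assumes "\<And>x y. x \<in> Tops \<Longrightarrow> y \<in> Tops \<Longrightarrow> g (P x y) = m (g x) (g y)" "g unit_top = u"
  shows "alg_hom_HT P sc m u (Phi sc g)"
  unfolding alg_hom_HT_def lin_on_HT_def
  using Phi_add Phi_hscale Phi_basis assms Phi_lin_prod by auto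

end

lemma HT_add: "f \<in> HT \<Longrightarrow> g \<in> HT \<Longrightarrow> f + g \<in> HT"
  unfolding HT_def mem_Collect_eq by (rule order_trans[OF keys_add], rule Un_least)
lemma HT_zero: "0 \<in> HT" by (simp add: HT_def)
lemma HT_hscale: "f \<in> HT \<Longrightarrow> hscale c f \<in> HT"
  unfolding HT_def mem_Collect_eq by (rule order_trans[OF keys_hscale])
lemma HT_basis: "t \<in> Tops \<Longrightarrow> basis t \<in> HT" by (simp add: HT_def basis_def)

lemma hvec_expand: "(f::'k::field hvec) = (\<Sum>t\<in>Poly_Mapping.keys f. hscale (Poly_Mapping.lookup f t) (basis t))"
proof (rule poly_mapping_eqI)
  fix k
  have "hscale (Poly_Mapping.lookup f t) (basis t) = Poly_Mapping.single t (Poly_Mapping.lookup f t)" for t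
    by (simp add: hscale_def basis_def)
  then show "Poly_Mapping.lookup f k = Poly_Mapping.lookup (\<Sum>t\<in>Poly_Mapping.keys f. hscale (Poly_Mapping.lookup f t) (basis t)) k"
    by (simp add: lookup_sum lookup_single when_def in_keys_iff)
qed

lemma HT_sum: assumes "\<And>i. i \<in> S \<Longrightarrow> h i \<in> HT" shows "sum h S \<in> HT"
  using assms
proof (induction S rule: infinite_finite_induct)
  case (insert x F) then have "h x \<in> HT" "sum h F \<in> HT" by auto
  then show ?case using insert.hyps by (simp add: HT_add)
qed (simp_all add: HT_zero)

lemma lin_sum:
  assumes "lin_on_HT sc \<psi>" "finite S" "\<And>i. i \<in> S \<Longrightarrow> h i \<in> HT"
  shows "\<psi> (sum h S) = (\<Sum>i\<in>S. \<psi> (h i))"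
  using assms(2,3)
proof (induction S rule: finite_induct)
  case empty
  have "\<psi> (0 + 0) = \<psi> 0 + \<psi> 0" using assms(1) HT_zero unfolding lin_on_HT_def by blast
  then have "\<psi> 0 = 0" by simp
  then show ?case by simp
next
  case (insert x F)
  have "sum h F \<in> HT" using insert.prems by (intro HT_sum) auto
  then show ?case using insert assms(1) unfolding lin_on_HT_def by simp
qed

lemma lin_unique:
  assumes "lin_on_HT sc \<psi>" "f \<in> HT" "\<And>t. t \<in> Tops \<Longrightarrow> \<psi> (basis t) = g t"
  shows "\<psi> f = Phi sc g f"
proof -
  have k: "Poly_Mapping.keys f \<subseteq> Tops" using assms(2) by (simp add: HT_def)
  have "\<psi> f = \<psi> (\<Sum>t\<in>Poly_Mapping.keys f. hscale (Poly_Mapping.lookup f t) (basis t))"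
    using hvec_expand by metis
  also have "\<dots> = (\<Sum>t\<in>Poly_Mapping.keys f. \<psi> (hscale (Poly_Mapping.lookup f t) (basis t)))"
    by (rule lin_sum[OF assms(1)]) (use k in \<open>auto intro: HT_hscale HT_basis\<close>)
  also have "\<dots> = Phi sc g f" unfolding Phi_def
  proof (rule sum.cong[OF refl])
    fix t assume "t \<in> Poly_Mapping.keys f"
    then have t: "t \<in> Tops" using k by blast
    have "\<psi> (hscale (Poly_Mapping.lookup f t) (basis t)) = sc (Poly_Mapping.lookup f t) (\<psi> (basis t))"
      using assms(1) HT_basis[OF t] unfolding lin_on_HT_def by blast
    then show "\<psi> (hscale (Poly_Mapping.lookup f t) (basis t)) = sc (Poly_Mapping.lookup f t) (g t)"
      using assms(3)[OF t] by simp
  qed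
  finally show ?thesis .
qed


lemma lin_prod_basis: "lin_prod P (basis x) (basis y) = (basis (P x y) :: 'k::field hvec)"
  by (simp add: lin_prod_def basis_def)

lemma basis_unique:
  assumes u: "\<psi> (basis unit_top) = u"
    and h1: "b1 \<Longrightarrow> \<forall>f\<in>HT. \<forall>g\<in>HT. \<psi> (lin_prod dot_top f g) = m1 (\<psi> f) (\<psi> g)"
    and h2: "b2 \<Longrightarrow> \<forall>f\<in>HT. \<forall>g\<in>HT. \<psi> (lin_prod down_top f g) = m2 (\<psi> f) (\<psi> g)"
    and gen: "\<And>t. t \<in> Tops \<Longrightarrow> t \<noteq> unit_top \<Longrightarrow> \<not> (b1 \<and> D.dec t) \<Longrightarrow> \<not> (b2 \<and> W.dec t) \<Longrightarrow> \<psi> (basis t) = a t"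
  shows "t \<in> Tops \<Longrightarrow> \<psi> (basis t :: 'k::field hvec) = phi0 b1 b2 a m1 m2 u t"
proof (induction "fst t" arbitrary: t rule: less_induct)
  case less
  show ?case
  proof (cases "t = unit_top")
    case True then show ?thesis using u phi0_unit[of b1 b2 a m1 m2 u] by (simp del: phi0_unit)
  next
    case nt: False
    show ?thesis
    proof (cases "b1 \<and> D.dec t")
      case True
      note sp = D.spl[OF True[THEN conjunct2]]
      define x where "x = fst (D.spl t)"
      define y where "y = snd (D.spl t)"
      have xy: "x \<in> Tops" "y \<in> Tops" "t = dot_top x y" "fst x < fst t" "fst y < fst t"
        using sp D.spl_lt[OF True[THEN conjunct2]] by (auto simp: x_def y_def)
      have "\<psi> (basis t :: 'k hvec) = \<psi> (lin_prod dot_top (basis x) (basis y))"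
        using xy(3) lin_prod_basis by metis
      also have "\<dots> = m1 (\<psi> (basis x)) (\<psi> (basis y))"
        using h1 True HT_basis xy(1,2) by blast
      also have "\<dots> = m1 (phi0 b1 b2 a m1 m2 u x) (phi0 b1 b2 a m1 m2 u y)"
        using less.hyps xy by simp
      also have "\<dots> = phi0 b1 b2 a m1 m2 u t"
      proof -
        have "phi0 b1 b2 a m1 m2 u t = m1 (phi0 b1 b2 a m1 m2 u (fst (D.spl t))) (phi0 b1 b2 a m1 m2 u (snd (D.spl t)))"
          by (rule phi0_1) (use less.prems nt True in auto)
        then show ?thesis by (simp add: x_def y_def)
      qed
      finally show ?thesis .
    next
      case F1: False
      show ?thesis
      proof (cases "b2 \<and> W.dec t")
        case True
        note sp = W.spl[OF True[THEN conjunct2]]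
        define x where "x = fst (W.spl t)"
        define y where "y = snd (W.spl t)"
        have xy: "x \<in> Tops" "y \<in> Tops" "t = down_top x y" "fst x < fst t" "fst y < fst t"
          using sp W.spl_lt[OF True[THEN conjunct2]] by (auto simp: x_def y_def)
        have "\<psi> (basis t :: 'k hvec) = \<psi> (lin_prod down_top (basis x) (basis y))"
          using xy(3) lin_prod_basis by metis
        also have "\<dots> = m2 (\<psi> (basis x)) (\<psi> (basis y))"
          using h2 True HT_basis xy(1,2) by blast
        also have "\<dots> = m2 (phi0 b1 b2 a m1 m2 u x) (phi0 b1 b2 a m1 m2 u y)"
          using less.hyps xy by simp
        also have "\<dots> = phi0 b1 b2 a m1 m2 u t"
        proof -
          have "phi0 b1 b2 a m1 m2 u t = m2 (phi0 b1 b2 a m1 m2 u (fst (W.spl t))) (phi0 b1 b2 a m1 m2 u (snd (W.spl t)))"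
            by (rule phi0_2) (use less.prems nt True F1 in auto)
          then show ?thesis by (simp add: x_def y_def)
        qed
        finally show ?thesis .
      next
        case False
        have "phi0 b1 b2 a m1 m2 u t = a t"
          by (rule phi0_3) (use less.prems nt F1 False in auto)
        then show ?thesis using gen[OF less.prems nt F1 False] by simp
      qed
    qed
  qed
qed

lemma part1: "freely_generated TYPE('k::field) TYPE('a::ab_group_add) dot_top indecomposable"
  unfolding freely_generated_def
proof (intro allI impI)
  fix sc :: "'k \<Rightarrow> 'a \<Rightarrow> 'a" and m u and a :: "top \<Rightarrow> 'a"
  assume ka: "k_algebra sc m u"
  interpret K: kalg sc m u by unfold_locales (rule ka)
  let ?g = "phi0 True False a m m u"
  have hom: "\<And>x y. x \<in> Tops \<Longrightarrow> y \<in> Tops \<Longrightarrow> ?g (dot_top x y) = m (?g x) (?g y)"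
    by (rule phi0_hom1) (auto simp: K.m_assoc K.m_ul K.m_ur)
  have H: "alg_hom_HT dot_top sc m u (Phi sc ?g)" by (rule K.Phi_hom[OF hom phi0_unit])
  have G: "\<forall>t. indecomposable t \<longrightarrow> Phi sc ?g (basis t) = a t"
  proof (intro allI impI)
    fix t assume "indecomposable t"
    then have "t \<in> Tops" "t \<noteq> unit_top" "\<not> D.dec t" unfolding D_ind[symmetric] D.ind_def by auto
    then have "?g t = a t" by (intro phi0_3) auto
    then show "Phi sc ?g (basis t) = a t" using K.Phi_basis by simp
  qed
  show "\<exists>\<phi>. alg_hom_HT dot_top sc m u \<phi> \<and> (\<forall>t. indecomposable t \<longrightarrow> \<phi> (basis t) = a t) \<and>
      (\<forall>\<psi>. alg_hom_HT dot_top sc m u \<psi> \<and> (\<forall>t. indecomposable t \<longrightarrow> \<psi> (basis t) = a t) \<longrightarrow>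
        (\<forall>f\<in>HT. \<psi> f = \<phi> f))"
  proof (intro exI conjI allI impI ballI)
    show "alg_hom_HT dot_top sc m u (Phi sc ?g)" by (rule H)
    show "\<And>t. indecomposable t \<Longrightarrow> Phi sc ?g (basis t) = a t" using G by blast
    fix \<psi> and f :: "'k hvec" assume A: "alg_hom_HT dot_top sc m u \<psi> \<and> (\<forall>t. indecomposable t \<longrightarrow> \<psi> (basis t) = a t)"
      and f: "f \<in> HT"
    have "\<psi> (basis t) = ?g t" if "t \<in> Tops" for t
    proof (rule basis_unique[OF _ _ _ _ that])
      show "\<psi> (basis unit_top) = u" using A by (simp add: alg_hom_HT_def)
      show "\<forall>f\<in>HT. \<forall>g\<in>HT. \<psi> (lin_prod dot_top f g) = m (\<psi> f) (\<psi> g)" using A by (simp add: alg_hom_HT_def)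
      show "\<forall>f\<in>HT. \<forall>g\<in>HT. \<psi> (lin_prod down_top f g) = m (\<psi> f) (\<psi> g)" if False using that by simp
      fix t assume "t \<in> Tops" "t \<noteq> unit_top" "\<not> (True \<and> D.dec t)"
      then have "indecomposable t" unfolding D_ind[symmetric] D.ind_def by simp
      then show "\<psi> (basis t) = a t" using A by blast
    qed
    then show "\<psi> f = Phi sc ?g f"
      using lin_unique[of sc \<psi> f ?g] A f by (simp add: alg_hom_HT_def)
  qed
qed

lemma part2: "freely_generated TYPE('k::field) TYPE('a::ab_group_add) down_top down_indecomposable"
  unfolding freely_generated_def
proof (intro allI impI)
  fix sc :: "'k \<Rightarrow> 'a \<Rightarrow> 'a" and m u and a :: "top \<Rightarrow> 'a"
  assume ka: "k_algebra sc m u"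
  interpret K: kalg sc m u by unfold_locales (rule ka)
  let ?g = "phi0 False True a m m u"
  have hom: "\<And>x y. x \<in> Tops \<Longrightarrow> y \<in> Tops \<Longrightarrow> ?g (down_top x y) = m (?g x) (?g y)"
    by (rule phi0_hom2) (auto simp: K.m_assoc K.m_ul K.m_ur)
  have H: "alg_hom_HT down_top sc m u (Phi sc ?g)" by (rule K.Phi_hom[OF hom phi0_unit])
  have G: "\<forall>t. down_indecomposable t \<longrightarrow> Phi sc ?g (basis t) = a t"
  proof (intro allI impI)
    fix t assume "down_indecomposable t"
    then have "t \<in> Tops" "t \<noteq> unit_top" "\<not> W.dec t" unfolding W_ind[symmetric] W.ind_def by auto
    then have "?g t = a t" by (intro phi0_3) auto
    then show "Phi sc ?g (basis t) = a t" using K.Phi_basis by simp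
  qed
  show "\<exists>\<phi>. alg_hom_HT down_top sc m u \<phi> \<and> (\<forall>t. down_indecomposable t \<longrightarrow> \<phi> (basis t) = a t) \<and>
      (\<forall>\<psi>. alg_hom_HT down_top sc m u \<psi> \<and> (\<forall>t. down_indecomposable t \<longrightarrow> \<psi> (basis t) = a t) \<longrightarrow>
        (\<forall>f\<in>HT. \<psi> f = \<phi> f))"
  proof (intro exI conjI allI impI ballI)
    show "alg_hom_HT down_top sc m u (Phi sc ?g)" by (rule H)
    show "\<And>t. down_indecomposable t \<Longrightarrow> Phi sc ?g (basis t) = a t" using G by blast
    fix \<psi> and f :: "'k hvec" assume A: "alg_hom_HT down_top sc m u \<psi> \<and> (\<forall>t. down_indecomposable t \<longrightarrow> \<psi> (basis t) = a t)"
      and f: "f \<in> HT"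
    have "\<psi> (basis t) = ?g t" if "t \<in> Tops" for t
    proof (rule basis_unique[OF _ _ _ _ that])
      show "\<psi> (basis unit_top) = u" using A by (simp add: alg_hom_HT_def)
      show "\<forall>f\<in>HT. \<forall>g\<in>HT. \<psi> (lin_prod dot_top f g) = m (\<psi> f) (\<psi> g)" if False using that by simp
      show "\<forall>f\<in>HT. \<forall>g\<in>HT. \<psi> (lin_prod down_top f g) = m (\<psi> f) (\<psi> g)" using A by (simp add: alg_hom_HT_def)
      fix t assume "t \<in> Tops" "t \<noteq> unit_top" "\<not> (True \<and> W.dec t)"
      then have "down_indecomposable t" unfolding W_ind[symmetric] W.ind_def by simp
      then show "\<psi> (basis t) = a t" using A by blast
    qed
    then show "\<psi> f = Phi sc ?g f"
      using lin_unique[of sc \<psi> f ?g] A f by (simp add: alg_hom_HT_def)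
  qed
qed

lemma part3: "freely_generated2 TYPE('k::field) TYPE('a::ab_group_add) bi_indecomposable"
  unfolding freely_generated2_def
proof (intro allI impI)
  fix sc :: "'k \<Rightarrow> 'a \<Rightarrow> 'a" and m1 m2 u and a :: "top \<Rightarrow> 'a"
  assume ka: "two_assoc_algebra sc m1 m2 u"
  interpret K1: kalg sc m1 u by unfold_locales (use ka in \<open>simp add: two_assoc_algebra_def\<close>)
  interpret K2: kalg sc m2 u by unfold_locales (use ka in \<open>simp add: two_assoc_algebra_def\<close>)
  let ?g = "phi0 True True a m1 m2 u"
  have hom1: "\<And>x y. x \<in> Tops \<Longrightarrow> y \<in> Tops \<Longrightarrow> ?g (dot_top x y) = m1 (?g x) (?g y)"
    by (rule phi0_hom1) (auto simp: K1.m_assoc K1.m_ul K1.m_ur)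
  have hom2: "\<And>x y. x \<in> Tops \<Longrightarrow> y \<in> Tops \<Longrightarrow> ?g (down_top x y) = m2 (?g x) (?g y)"
    by (rule phi0_hom2) (auto simp: K2.m_assoc K2.m_ul K2.m_ur)
  have H1: "alg_hom_HT dot_top sc m1 u (Phi sc ?g)" by (rule K1.Phi_hom[OF hom1 phi0_unit])
  have H2: "alg_hom_HT down_top sc m2 u (Phi sc ?g)" by (rule K2.Phi_hom[OF hom2 phi0_unit])
  have G: "\<forall>t. bi_indecomposable t \<longrightarrow> Phi sc ?g (basis t) = a t"
  proof (intro allI impI)
    fix t assume "bi_indecomposable t"
    then have "t \<in> Tops" "t \<noteq> unit_top" "\<not> D.dec t" "\<not> W.dec t"
      unfolding bi_indecomposable_def D_ind[symmetric] W_ind[symmetric] D.ind_def W.ind_def by auto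
    then have "?g t = a t" by (intro phi0_3) auto
    then show "Phi sc ?g (basis t) = a t" using K1.Phi_basis by simp
  qed
  show "\<exists>\<phi>. alg_hom_HT dot_top sc m1 u \<phi> \<and> alg_hom_HT down_top sc m2 u \<phi> \<and>
      (\<forall>t. bi_indecomposable t \<longrightarrow> \<phi> (basis t) = a t) \<and>
      (\<forall>\<psi>. alg_hom_HT dot_top sc m1 u \<psi> \<and> alg_hom_HT down_top sc m2 u \<psi> \<and>
          (\<forall>t. bi_indecomposable t \<longrightarrow> \<psi> (basis t) = a t) \<longrightarrow>
        (\<forall>f\<in>HT. \<psi> f = \<phi> f))"
  proof (intro exI conjI allI impI ballI)
    show "alg_hom_HT dot_top sc m1 u (Phi sc ?g)" by (rule H1)
    show "alg_hom_HT down_top sc m2 u (Phi sc ?g)" by (rule H2)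
    show "\<And>t. bi_indecomposable t \<Longrightarrow> Phi sc ?g (basis t) = a t" using G by blast
    fix \<psi> and f :: "'k hvec" assume A: "alg_hom_HT dot_top sc m1 u \<psi> \<and> alg_hom_HT down_top sc m2 u \<psi> \<and>
          (\<forall>t. bi_indecomposable t \<longrightarrow> \<psi> (basis t) = a t)"
      and f: "f \<in> HT"
    have "\<psi> (basis t) = ?g t" if "t \<in> Tops" for t
    proof (rule basis_unique[OF _ _ _ _ that])
      show "\<psi> (basis unit_top) = u" using A by (simp add: alg_hom_HT_def)
      show "\<forall>f\<in>HT. \<forall>g\<in>HT. \<psi> (lin_prod dot_top f g) = m1 (\<psi> f) (\<psi> g)" using A by (simp add: alg_hom_HT_def)
      show "\<forall>f\<in>HT. \<forall>g\<in>HT. \<psi> (lin_prod down_top f g) = m2 (\<psi> f) (\<psi> g)" using A by (simp add: alg_hom_HT_def)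
      fix t assume "t \<in> Tops" "t \<noteq> unit_top" "\<not> (True \<and> D.dec t)" "\<not> (True \<and> W.dec t)"
      then have "bi_indecomposable t"
        unfolding bi_indecomposable_def D_ind[symmetric] W_ind[symmetric] D.ind_def W.ind_def by simp
      then show "\<psi> (basis t) = a t" using A by blast
    qed
    then show "\<psi> f = Phi sc ?g f"
      using lin_unique[of sc \<psi> f ?g] A f by (simp add: alg_hom_HT_def)
  qed
qed

theorem proposition5:
  shows "freely_generated TYPE('k::field) TYPE('a::ab_group_add) dot_top indecomposable
       \<and> freely_generated TYPE('k) TYPE('b::ab_group_add) down_top down_indecomposable
       \<and> freely_generated2 TYPE('k) TYPE('c::ab_group_add) bi_indecomposable"
  using part1 part2 part3 by blast

end
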